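(* Let $p$ be an odd prime, let $\Delta\in\mathbb{Z}$ with $\Delta\equiv 3\pmod 4$ be a quadratic non-residue modulo $p$, and let $\mathfrak{p}=p\mathbb{Z}[\sqrt{\Delta}]$. Let $A_p=\prod_{0\le k\le p-1}(k+\sqrt{\Delta})$. Then $$A_p^{\frac{(p-1)(p-3)}{4}}\equiv\begin{cases}\Delta^{-\frac{p-1}{4}}\pmod{\mathfrak{p}}&\text{if } p\equiv 1\pmod 4,\\ (-1)^{\frac{p-3}{4}}\pmod{\mathfrak{p}}&\text{if } p\equiv 3\pmod 4,\end{cases}$$ where $\Delta^{-1}$ denotes the inverse of $\Delta$ modulo $p$. *)

theory Defs
  imports "HOL-Number_Theory.Number_Theory"
begin

text \<open>Elements of Z[sqrt D] are represented as pairs (a, b) of integers, meaning a + b sqrt D.\<close>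

definition zs_mult :: "int \<Rightarrow> int \<times> int \<Rightarrow> int \<times> int \<Rightarrow> int \<times> int" where
  "zs_mult D x y = (fst x * fst y + D * snd x * snd y, fst x * snd y + snd x * fst y)"

fun zs_pow :: "int \<Rightarrow> int \<times> int \<Rightarrow> nat \<Rightarrow> int \<times> int" where
  "zs_pow D x 0 = (1, 0)"
| "zs_pow D x (Suc n) = zs_mult D x (zs_pow D x n)"

fun zs_A :: "int \<Rightarrow> nat \<Rightarrow> int \<times> int" where
  "zs_A D 0 = (1, 0)"
| "zs_A D (Suc n) = zs_mult D (int n, 1) (zs_A D n)"

text \<open>Congruence modulo the ideal p Z[sqrt D]: both coordinates of the difference divisible by p.\<close>
definition zs_cong :: "int \<Rightarrow> int \<times> int \<Rightarrow> int \<times> int \<Rightarrow> bool" where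
  "zs_cong p x y \<longleftrightarrow> p dvd (fst x - fst y) \<and> p dvd (snd x - snd y)"

end

theory Submission
  imports Defs "HOL-Computational_Algebra.Polynomial"
begin


definition phi :: "complex \<Rightarrow> int \<times> int \<Rightarrow> complex" where
  "phi t x = of_int (fst x) + of_int (snd x) * t"

lemma phi_mult:
  assumes "t^2 = of_int D"
  shows "phi t (zs_mult D x y) = phi t x * phi t y"
proof -
  have "t * t = of_int D" using assms by (simp add: power2_eq_square)
  then show ?thesis
    unfolding phi_def zs_mult_def by (simp add: algebra_simps)
qed

lemma phi_pow:
  assumes "t^2 = of_int D"
  shows "phi t (zs_pow D x n) = phi t x ^ n"
  by (induction n) (simp add: phi_def, simp add: phi_mult[OF assms])

lemma phi_A:
  assumes "t^2 = of_int D"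
  shows "phi t (zs_A D n) = (\<Prod>k<n. of_nat k + t)"
proof (induction n)
  case 0 then show ?case by (simp add: phi_def)
next
  case (Suc n)
  have "phi t (int n, 1) = of_nat n + t" by (simp add: phi_def)
  then show ?case using Suc by (simp add: phi_mult[OF assms] mult.commute)
qed

definition ev :: "complex \<Rightarrow> int poly \<Rightarrow> complex" where
  "ev t g = poly (map_poly of_int g) t"

lemma ev_pCons: "ev t (pCons a g) = of_int a + t * ev t g"
  unfolding ev_def by (simp add: map_poly_pCons)

lemma ev_add: "ev t (f + g) = ev t f + ev t g"
proof -
  have "map_poly (of_int::int\<Rightarrow>complex) (f + g) = map_poly of_int f + map_poly of_int g"
    by (rule poly_eqI) (simp add: coeff_map_poly)
  then show ?thesis unfolding ev_def by simp
qed

lemma ev_diff: "ev t (f - g) = ev t f - ev t g"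
proof -
  have "map_poly (of_int::int\<Rightarrow>complex) (f - g) = map_poly of_int f - map_poly of_int g"
    by (rule poly_eqI) (simp add: coeff_map_poly)
  then show ?thesis unfolding ev_def by simp
qed

lemma ev_smult: "ev t (smult a g) = of_int a * ev t g"
proof -
  have "map_poly (of_int::int\<Rightarrow>complex) (smult a g) = smult (of_int a) (map_poly of_int g)"
    by (rule poly_eqI) (simp add: coeff_map_poly)
  then show ?thesis unfolding ev_def by simp
qed

lemma ev_mult: "ev t (f * g) = ev t f * ev t g"
proof (induction f)
  case 0
  then show ?case by (simp add: ev_def)
next
  case (pCons a p)
  have "ev t (pCons a p * g) = ev t (smult a g + pCons 0 (p * g))" by simp
  also have "\<dots> = of_int a * ev t g + t * (ev t p * ev t g)"
    by (simp add: ev_add ev_smult ev_pCons pCons)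
  finally show ?case by (simp add: ev_pCons algebra_simps)
qed

lemma ev_prod: "ev t (\<Prod>k\<in>A. f k) = (\<Prod>k\<in>A. ev t (f k))"
proof (induction A rule: infinite_finite_induct)
  case (infinite A)
  then show ?case by (simp add: ev_def)
next
  case empty
  then show ?case by (simp add: ev_def)
next
  case (insert x F)
  then show ?case by (simp add: ev_mult)
qed

lemma ev_monom: "ev t (monom 1 n) = t ^ n"
  unfolding ev_def by (simp add: map_poly_monom poly_monom)

lemma ev_0: "ev t 0 = 0" by (simp add: ev_def)

lemma ev_lin: "ev t [:int k, 1:] = of_nat k + t"
  by (simp add: ev_pCons ev_0)

lemma ev_Z:
  fixes g :: "int poly"
  shows "\<exists>W. \<forall>t. t^2 = of_int D \<longrightarrow> ev t g = phi t W"
proof (induction g)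
  case 0
  then show ?case by (intro exI[of _ "(0,0)"]) (simp add: ev_def phi_def)
next
  case (pCons a g)
  then obtain W where W: "\<forall>t. t^2 = of_int D \<longrightarrow> ev t g = phi t W" by blast
  show ?case
  proof (intro exI[of _ "(a + D * snd W, fst W)"] allI impI)
    fix t :: complex assume t: "t^2 = of_int D"
    then have "t * t = of_int D" by (simp add: power2_eq_square)
    then show "ev t (pCons a g) = phi t (a + D * snd W, fst W)"
      using W t by (simp add: ev_pCons phi_def algebra_simps)
  qed
qed



lemma root_lemma:
  fixes p :: int and f :: "int poly"
  assumes "prime p"
  shows "finite S \<Longrightarrow> card S = n \<Longrightarrow> (\<forall>a\<in>S. \<forall>b\<in>S. a \<noteq> b \<longrightarrow> \<not> p dvd (a - b))
    \<Longrightarrow> degree f < n \<Longrightarrow> (\<forall>a\<in>S. p dvd poly f a) \<Longrightarrow> p dvd coeff f i"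
proof (induction n arbitrary: S f i)
  case 0
  then show ?case by simp
next
  case (Suc n)
  then obtain a where a: "a \<in> S" by (metis card.empty empty_iff nat.distinct(1) subsetI subset_antisym)
  define g where "g = synthetic_div f a"
  have fg: "f = [:-a, 1:] * g + [:poly f a:]" unfolding g_def by (rule synthetic_div_correct'[symmetric])
  have ga: "p dvd coeff g j" for j
  proof (cases "degree f = 0")
    case True
    then have "g = 0" unfolding g_def by (simp add: synthetic_div_eq_0_iff)
    then show ?thesis by simp
  next
    case False
    have dg: "degree g < n" unfolding g_def using Suc.prems(4) False by (simp add: degree_synthetic_div)
    show ?thesis
    proof (rule Suc.IH[of "S - {a}"])
      show "finite (S - {a})" using Suc.prems by simp
      show "card (S - {a}) = n" using Suc.prems a by simp
      show "\<forall>x\<in>S - {a}. \<forall>y\<in>S - {a}. x \<noteq> y \<longrightarrow> \<not> p dvd x - y" using Suc.prems(3) by blast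
      show "degree g < n" by fact
      show "\<forall>b\<in>S - {a}. p dvd poly g b"
      proof
        fix b assume b: "b \<in> S - {a}"
        have "poly f b = (b - a) * poly g b + poly f a" by (subst fg) (simp add: algebra_simps)
        then have "(b - a) * poly g b = poly f b - poly f a" by simp
        moreover have "p dvd poly f b - poly f a" using Suc.prems(5) a b by auto
        ultimately have "p dvd (b - a) * poly g b" by simp
        moreover have "\<not> p dvd (b - a)" using Suc.prems(3) a b by auto
        ultimately show "p dvd poly g b" using assms prime_dvd_mult_iff by blast
      qed
    qed
  qed
  have pa: "p dvd poly f a" using Suc.prems(5) a by auto
  have "[:-a, 1:] * g = smult (-a) g + pCons 0 g" by simp
  then have "coeff f i = - a * coeff g i + coeff (pCons 0 g) i + coeff [:poly f a:] i"
    by (subst fg, cases i) (simp_all add: algebra_simps)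
  moreover have "p dvd coeff (pCons 0 g) i" using ga by (cases i) simp_all
  moreover have "p dvd coeff [:poly f a:] i" using pa by (cases i) simp_all
  ultimately show ?case using ga by simp
qed



lemma fermat_int:
  assumes "prime p" "\<not> int p dvd a"
  shows "[a ^ (p - 1) = 1] (mod int p)"
proof -
  define n where "n = nat (a mod int p)"
  have p0: "int p > 0" using assms prime_gt_0_nat by simp
  have n: "int n = a mod int p" unfolding n_def using p0 by simp
  have "\<not> p dvd n"
  proof
    assume "p dvd n"
    then have "int p dvd a mod int p" using n by (metis int_dvd_int_iff)
    then show False using assms(2) by (simp add: dvd_mod_iff)
  qed
  then have "[n ^ (p - 1) = 1] (mod p)" using assms(1) fermat_theorem by blast
  then have "[int n ^ (p - 1) = 1] (mod int p)" by (metis cong_int_iff of_nat_1 of_nat_power)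
  moreover have "[int n = a] (mod int p)" using n by (simp add: cong_def)
  ultimately show ?thesis by (meson cong_pow cong_sym cong_trans)
qed

lemma fermat_int2:
  assumes "prime p"
  shows "int p dvd a ^ p - a"
proof (cases "int p dvd a")
  case True
  have "p > 0" using assms prime_gt_0_nat by simp
  then have "int p dvd a ^ p" using True by (metis dvd_power dvd_trans gr0_conv_Suc)
  then show ?thesis using True by simp
next
  case False
  have "[a ^ (p - 1) = 1] (mod int p)" using fermat_int[OF assms False] .
  then have "[a * a ^ (p - 1) = a * 1] (mod int p)" using cong_scalar_left by blast
  moreover have "a * a ^ (p - 1) = a ^ p" using assms prime_gt_0_nat
    by (metis Suc_diff_1 power_Suc)
  ultimately show ?thesis by (simp add: cong_iff_dvd_diff)
qed

definition Fp :: "nat \<Rightarrow> int poly" where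
  "Fp p = (\<Prod>k<p. [:int k, 1:]) - (monom 1 p - monom 1 1)"

lemma Fp_coeff:
  assumes "prime p"
  shows "int p dvd coeff (Fp p) i"
proof -
  have p1: "p > 1" using assms prime_gt_1_nat by simp
  have degP: "degree (\<Prod>k<p. [:int k, 1:]) = p"
    by (subst degree_prod_eq_sum_degree) auto
  have lcP: "lead_coeff (\<Prod>k<p. [:int k, 1:]) = 1"
    by (simp add: lead_coeff_prod)
  have dle: "degree (Fp p) \<le> p" unfolding Fp_def
    by (intro degree_diff_le) (use p1 in \<open>auto simp: degP intro!: degree_diff_le order.trans[OF degree_monom_le]\<close>)
  have cp: "coeff (Fp p) p = 0" unfolding Fp_def using lcP degP p1 by simp
  have dF: "degree (Fp p) < p"
  proof (cases "Fp p = 0")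
    case True then show ?thesis using p1 by simp
  next
    case False
    then have "coeff (Fp p) (degree (Fp p)) \<noteq> 0" by simp
    then have "degree (Fp p) \<noteq> p" using cp by metis
    then show ?thesis using dle by simp
  qed
  show ?thesis
  proof (rule root_lemma[of "int p" "{0..<int p}" p])
    show "prime (int p)" using assms by simp
    show "finite {0..<int p}" by simp
    show "card {0..<int p} = p" by simp
    show "\<forall>a\<in>{0..<int p}. \<forall>b\<in>{0..<int p}. a \<noteq> b \<longrightarrow> \<not> int p dvd a - b"
    proof (intro ballI impI notI)
      fix a b assume "a \<in> {0..<int p}" "b \<in> {0..<int p}" "a \<noteq> b" "int p dvd a - b"
      then show False using zdvd_not_zless[of "a - b" "int p"] zdvd_not_zless[of "b - a" "int p"]
        by (smt (verit) atLeastLessThan_iff dvd_diff_commute)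
    qed
    show "degree (Fp p) < p" by fact
    show "\<forall>a\<in>{0..<int p}. int p dvd poly (Fp p) a"
    proof
      fix a assume a: "a \<in> {0..<int p}"
      have "poly (Fp p) a = (\<Prod>k<p. int k + a) - (a ^ p - a)"
        unfolding Fp_def by (simp add: poly_prod poly_monom)
      moreover have "int p dvd (\<Prod>k<p. int k + a)"
      proof (cases "a = 0")
        case True
        have "int 0 + a = 0" using True by simp
        then have "(\<Prod>k<p. int k + a) = 0" by (intro prod_zero) (use p1 in auto)
        then show ?thesis by (metis dvd_0_right)
      next
        case False
        define k where "k = nat (int p - a)"
        have k: "k < p" "int k + a = int p" using a False unfolding k_def by auto
        then show ?thesis by (intro dvd_prod_eqI[of _ k]) auto
      qed
      moreover have "int p dvd a ^ p - a" using fermat_int2[OF assms] .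
      ultimately show "int p dvd poly (Fp p) a" by simp
    qed
  qed
qed



lemma key_cong:
  assumes "prime p" "D \<noteq> 0"
  shows "zs_cong (int p) (zs_A D p) (fst (zs_pow D (0,1) p), snd (zs_pow D (0,1) p) - 1)"
proof -
  define A where "A = zs_A D p"
  define B where "B = zs_pow D (0,1) p"
  define G where "G = map_poly (\<lambda>c. c div int p) (Fp p)"
  have FG: "Fp p = smult (int p) G"
    unfolding G_def by (rule poly_eqI) (simp add: coeff_map_poly Fp_coeff[OF assms(1)])
  obtain W where W: "\<And>t::complex. t^2 = of_int D \<Longrightarrow> ev t G = phi t W" using ev_Z[of D G] by blast
  have main: "of_int (fst A - fst B - int p * fst W) + of_int (snd A - snd B + 1 - int p * snd W) * t = 0"
    if t: "t^2 = of_int D" for t :: complex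
  proof -
    have "ev t (Fp p) = (\<Prod>k<p. of_nat k + t) - (t ^ p - t)"
      unfolding Fp_def by (simp add: ev_diff ev_prod ev_lin ev_monom)
    also have "\<dots> = phi t A - (phi t B - t)"
    proof -
      have "phi t A = (\<Prod>k<p. of_nat k + t)" unfolding A_def by (rule phi_A[OF t])
      moreover have "phi t B = phi t (0,1) ^ p" unfolding B_def by (rule phi_pow[OF t])
      moreover have "phi t (0,1) = t" by (simp add: phi_def)
      ultimately show ?thesis by simp
    qed
    finally have "phi t A - (phi t B - t) = of_int (int p) * phi t W"
      using W[OF t] FG by (simp add: ev_smult)
    then show ?thesis by (simp add: phi_def algebra_simps)
  qed
  define s where "s = csqrt (of_int D)"
  have s2: "s^2 = of_int D" unfolding s_def by simp
  have s0: "s \<noteq> 0" using assms(2) s2 by auto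
  have ms2: "(-s)^2 = of_int D" using s2 by simp
  define u where "u = fst A - fst B - int p * fst W"
  define v where "v = snd A - snd B + 1 - int p * snd W"
  have e1: "of_int u + of_int v * s = 0" using main[OF s2] unfolding u_def v_def .
  have e2: "of_int u - of_int v * s = 0" using main[OF ms2] unfolding u_def v_def by simp
  have "2 * (of_int u :: complex) = 0" using e1 e2 by (metis add_diff_cancel add_diff_eq mult_2 diff_zero add.commute)
  then have u0: "u = 0" by simp
  then have "of_int v * s = 0" using e1 by simp
  then have v0: "v = 0" using s0 by simp
  show ?thesis unfolding zs_cong_def using u0 v0 unfolding u_def v_def A_def B_def
    by (simp add: algebra_simps)
qed



lemma zs_cong_refl: "zs_cong p x x" by (simp add: zs_cong_def)
lemma zs_cong_sym: "zs_cong p x y \<Longrightarrow> zs_cong p y x"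
  by (simp add: zs_cong_def dvd_diff_commute)
lemma zs_cong_trans: "zs_cong p x y \<Longrightarrow> zs_cong p y z \<Longrightarrow> zs_cong p x z"
  unfolding zs_cong_def by (metis cong_iff_dvd_diff cong_trans)

lemma zs_cong_iff: "zs_cong p x y \<longleftrightarrow> [fst x = fst y] (mod p) \<and> [snd x = snd y] (mod p)"
  by (simp add: zs_cong_def cong_iff_dvd_diff)

lemma zs_cong_mult: "zs_cong p x x' \<Longrightarrow> zs_cong p y y' \<Longrightarrow> zs_cong p (zs_mult D x y) (zs_mult D x' y')"
  unfolding zs_cong_iff zs_mult_def by (auto intro!: cong_add cong_mult)

lemma zs_cong_pow: "zs_cong p x y \<Longrightarrow> zs_cong p (zs_pow D x n) (zs_pow D y n)"
  by (induction n) (auto simp: zs_cong_refl zs_cong_mult)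

lemma zs_pow_0b:
  "zs_pow D (0,b) (2*j) = ((b*b*D)^j, 0) \<and> zs_pow D (0,b) (Suc (2*j)) = (0, b*(b*b*D)^j)"
proof (induction j)
  case 0
  then show ?case by (simp add: zs_mult_def)
next
  case (Suc j)
  define c where "c = b*b*D"
  have e: "2 * Suc j = Suc (Suc (2*j))" by simp
  have i1: "zs_pow D (0,b) (Suc (2*j)) = (0, b*c^j)" using Suc.IH[THEN conjunct2] unfolding c_def .
  have i2: "zs_pow D (0,b) (2 * Suc j) = (c^Suc j, 0)"
    unfolding e zs_pow.simps(2)[of D _ "Suc (2*j)"] i1 by (simp add: zs_mult_def c_def)
  have i3: "zs_pow D (0,b) (Suc (2 * Suc j)) = (0, b*c^Suc j)"
    unfolding zs_pow.simps(2)[of D _ "2 * Suc j"] i2 by (simp add: zs_mult_def)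
  show ?case using i2 i3 c_def by simp
qed

lemma two_pow:
  fixes p e :: nat
  assumes p: "prime p" and pe: "p = 4*e+1"
  shows "[2^(2*e) = (-1)^e] (mod int p)"
proof -
  have p2: "p > 2" using p pe prime_gt_1_nat by (cases e) auto
  have h: "(p - 1) div 2 = 2*e" using pe by simp
  have "[Legendre (-1) p = (-1) ^ (2*e)] (mod p)"
    using euler_criterion[OF p p2, of "-1"] h by simp
  then have L: "[Legendre (-1) p = 1] (mod p)" by simp
  have n2: "\<not> int p dvd 2" using p2 by (metis int_dvd_int_iff nat_dvd_not_less of_nat_numeral zero_less_numeral)
  have "QuadRes (int p) (-1)"
  proof (rule ccontr)
    assume nq: "\<not> QuadRes (int p) (-1)"
    have "\<not> [-1 = 0] (mod int p)" using p2 by (simp add: cong_iff_dvd_diff)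
    then have "Legendre (-1) p = -1" using nq by (simp add: Legendre_def)
    then have "[-1 = 1] (mod int p)" using L by simp
    then have "int p dvd 2" by (simp add: cong_iff_dvd_diff)
    then show False using n2 by simp
  qed
  then obtain y where y: "[y^2 = -1] (mod int p)" unfolding QuadRes_def by blast
  have ny: "\<not> int p dvd 1 + y"
  proof
    assume "int p dvd 1 + y"
    then have "[y = -1] (mod int p)" by (simp add: cong_iff_dvd_diff add.commute)
    then have "[y^2 = (-1)^2] (mod int p)" by (rule cong_pow)
    then have "[y^2 = 1] (mod int p)" by simp
    then have "[-1 = 1] (mod int p)" using cong_trans[OF cong_sym[OF y]] by blast
    then have "int p dvd 2" by (simp add: cong_iff_dvd_diff)
    then show False using n2 by simp
  qed
  have F: "[(1+y)^(p-1) = 1] (mod int p)" using fermat_int[OF p ny] .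
  have sq: "[(1+y)^2 = 2*y] (mod int p)"
  proof -
    have e0: "(1+y)^2 = 2*y + (y^2 + 1)" by (simp add: power2_eq_square algebra_simps)
    have "[y^2 + 1 = -1 + 1] (mod int p)" using y by (rule cong_add) (rule cong_refl)
    then have "[y^2 + 1 = 0] (mod int p)" by simp
    then have "[2*y + (y^2 + 1) = 2*y + 0] (mod int p)" by (rule cong_add[OF cong_refl])
    then show ?thesis unfolding e0 by simp
  qed
  have E1: "(1+y)^(p-1) = ((1+y)^2)^(2*e)" using pe by (simp add: power_mult[symmetric])
  have C1: "[((1+y)^2)^(2*e) = (2*y)^(2*e)] (mod int p)" using sq by (rule cong_pow)
  have E2: "(2*y)^(2*e) = 2^(2*e) * (y^2)^e" by (simp add: power_mult_distrib power_mult[symmetric] mult.commute)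
  have C2: "[2^(2*e) * (y^2)^e = 2^(2*e) * (-1)^e] (mod int p)" using y by (intro cong_mult cong_pow cong_refl)
  have "[(1+y)^(p-1) = 2^(2*e) * (-1)^e] (mod int p)"
    using cong_trans[OF C1[folded E1, unfolded E2] C2] .
  then have "[2^(2*e) * (-1)^e = 1] (mod int p)" using cong_trans[OF cong_sym F] by blast
  then have "[2^(2*e) * (-1)^e * (-1)^e = 1 * (-1)^e] (mod int p)" by (rule cong_mult) auto
  moreover have "(2::int)^(2*e) * (-1)^e * (-1)^e = 2^(2*e)"
    by (simp add: mult.assoc power_mult_distrib[symmetric])
  ultimately show ?thesis by simp
qed



lemma a1: "[(p::nat) = 1] (mod 4) \<Longrightarrow> p = 4*(p div 4)+1" unfolding cong_def by presburger
lemma a2: "(p::nat) = 4*e+1 \<Longrightarrow> e \<ge> 1 \<Longrightarrow> k = 2*e - 1 \<Longrightarrow> (p - 1) * (p - 3) div 4 = 2 * (e*k)"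
proof -
  assume pe: "p = 4*e+1" and e1: "e \<ge> 1" and kd: "k = 2*e - 1"
  obtain f where f: "e = Suc f" using e1 by (cases e) auto
  have "p - 1 = 4*e" "p - 3 = 4 * f + 2" "k = 2*f+1" using pe f kd by auto
  then have "(p - 1) * (p - 3) = 4 * (2 * (e * k))" by (simp add: algebra_simps)
  then show ?thesis by simp
qed
lemma a3: "k + 1 = 2*e \<Longrightarrow> h = 2*e \<Longrightarrow> (4*(D::int))^(e*k) * D^e = (2^(2*e))^k * (D^h)^e"
proof -
  assume k: "k + 1 = 2*e" "h = 2*e"
  have "(4*D)^(e*k) * D^e = 4^(e*k) * D^(e*k + e)" by (simp add: power_mult_distrib power_add)
  also have "4^(e*k) = ((2::int)^(2*e))^k"
  proof -
    have "(4::int) = 2^2" by simp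
    then have "(4::int)^(e*k) = 2^(2*(e*k))" by (simp only: power_mult)
    also have "\<dots> = (2^(2*e))^k" by (simp only: power_mult[symmetric] mult.assoc)
    finally show ?thesis .
  qed
  also have "e*k + e = h * e"
  proof -
    have "e*k + e = e*(k+1)" by (simp add: algebra_simps)
    then show ?thesis using k by (metis mult.commute)
  qed
  finally show ?thesis by (simp add: power_mult)
qed
lemma a4: "k + 1 = 2*e \<Longrightarrow> ((-1::int)^e)^k * (-1)^e = 1"
proof -
  assume k: "k + 1 = 2*e"
  have "((-1::int)^e)^k * (-1)^e = (-1)^(e*(k+1))" by (simp add: power_mult power_add)
  also have "\<dots> = ((-1)^2)^(e*e)" using k by (simp only: power_mult[symmetric]) (simp add: algebra_simps)
  finally show ?thesis by simp
qed
lemma a5: "[(p::nat) = 3] (mod 4) \<Longrightarrow> p = 4*(p div 4)+3" unfolding cong_def by presburger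
lemma a6: "(p::nat) = 4*q+3 \<Longrightarrow> h = 2*q+1 \<Longrightarrow> (p - 1) * (p - 3) div 4 = 2 * (h*q)"
proof -
  assume pq: "p = 4*q+3" "h = 2*q+1"
  have "p - 1 = 2*h" "p - 3 = 4*q" using pq by auto
  then have "(p - 1) * (p - 3) = 4 * (2 * (h * q))" by (simp add: algebra_simps)
  then show ?thesis by simp
qed
lemma a7: "p = Suc (2*h) \<Longrightarrow> (4*(D::int))^h = 2^(p-1) * D^h"
  by (simp add: power_mult_distrib power_mult)

theorem lemma2p1:
  fixes p :: nat and D :: int
  assumes "prime p" and "odd p"
    and "[D = 3] (mod 4)"
    and "\<not> QuadRes (int p) D"
  shows "([p = 1] (mod 4) \<longrightarrow>
            (\<forall>Dinv :: int. [D * Dinv = 1] (mod int p) \<longrightarrow>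
               zs_cong (int p) (zs_pow D (zs_A D p) ((p - 1) * (p - 3) div 4))
                               (Dinv ^ ((p - 1) div 4), 0)))
       \<and> ([p = 3] (mod 4) \<longrightarrow>
               zs_cong (int p) (zs_pow D (zs_A D p) ((p - 1) * (p - 3) div 4))
                               ((-1) ^ ((p - 3) div 4), 0))"
proof -
  note pp = assms(1)
  have p2: "p > 2" using assms(1,2) prime_gt_1_nat[OF pp] by (metis dvd_refl le_neq_implies_less Suc_1 Suc_leI)
  have nD0: "\<not> [D = 0] (mod int p)"
  proof
    assume "[D = 0] (mod int p)"
    then have "[0^2 = D] (mod int p)" by (metis cong_sym zero_power2)
    then show False using assms(4) unfolding QuadRes_def by blast
  qed
  then have D0: "D \<noteq> 0" by auto
  define h where "h = (p - 1) div 2"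
  have ph: "p = Suc (2*h)" using assms(2) p2 unfolding h_def by (auto elim!: oddE)
  have "Legendre D (int p) = -1" using nD0 assms(4) by (simp add: Legendre_def)
  then have Dh: "[D^h = -1] (mod int p)"
    using euler_criterion[OF pp p2, of D] unfolding h_def by (metis cong_sym)
  have B0: "zs_pow D (0,1) (Suc (2*h)) = (0, 1*(1*1*D)^h)" by (rule zs_pow_0b[THEN conjunct2])
  have B: "zs_pow D (0,1) p = (0, D^h)" using B0 unfolding ph[symmetric] by simp
  have KA: "zs_cong (int p) (zs_A D p) (0, -2)"
  proof (rule zs_cong_trans[OF key_cong[OF pp D0]])
    have "[D^h - 1 = -1 - 1] (mod int p)" using Dh by (intro cong_diff) auto
    then show "zs_cong (int p) (fst (zs_pow D (0, 1) p), snd (zs_pow D (0, 1) p) - 1) (0, - 2)"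
      unfolding B zs_cong_iff by simp
  qed
  have Am: "zs_cong (int p) (zs_pow D (zs_A D p) (2*j)) ((4*D)^j, 0)" for j
  proof -
    have "zs_cong (int p) (zs_pow D (zs_A D p) (2*j)) (zs_pow D (0,-2) (2*j))"
      by (rule zs_cong_pow[OF KA])
    moreover have "zs_pow D (0,-2) (2*j) = ((4*D)^j, 0)" using zs_pow_0b[of D "-2" j] by simp
    ultimately show ?thesis by simp
  qed
  have fin: "zs_cong (int p) X (T, 0)" if "zs_cong (int p) X (Y, 0)" "[Y = T] (mod int p)" for X Y T
    using that by (auto simp: zs_cong_iff intro: cong_trans)
  have n2: "\<not> int p dvd 2" using p2 by (metis int_dvd_int_iff nat_dvd_not_less of_nat_numeral zero_less_numeral)
  show ?thesis
  proof (intro conjI impI allI)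
    fix Dinv :: int
    assume c1: "[p = 1] (mod 4)" and Di: "[D * Dinv = 1] (mod int p)"
    define e where "e = p div 4"
    have pe: "p = 4*e+1" using a1[OF c1] unfolding e_def .
    have e1: "e \<ge> 1" using pe p2 by simp
    define k where "k = 2*e - 1"
    have k: "k + 1 = 2*e" "h = 2*e" using e1 pe unfolding k_def h_def by auto
    define j where "j = e * k"
    have m: "(p - 1) * (p - 3) div 4 = 2 * j" unfolding j_def using a2[OF pe e1 k_def] .
    have eq1: "(4*D)^j * D^e = (2^(2*e))^k * (D^h)^e" unfolding j_def using a3[OF k] .
    have "[(2^(2*e))^k * (D^h)^e = ((-1)^e)^k * (-1)^e] (mod int p)"
      using two_pow[OF pp pe] Dh by (intro cong_mult cong_pow) auto
    moreover have "((-1::int)^e)^k * (-1)^e = 1" using a4[OF k(1)] .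
    ultimately have c2: "[(4*D)^j * D^e = 1] (mod int p)" using eq1 by simp
    have h110: "[(4*D)^j * 1 = (4*D)^j * (D*Dinv)^e] (mod int p)"
    proof -
      have "[(D*Dinv)^e = 1^e] (mod int p)" using Di by (rule cong_pow)
      then have "[1 = (D*Dinv)^e] (mod int p)" by (metis cong_sym power_one)
      then show ?thesis by (rule cong_scalar_left)
    qed
    have h116: "(4*D)^j * (D*Dinv)^e = ((4*D)^j * D^e) * Dinv^e" by (simp add: power_mult_distrib)
    have h117: "[((4*D)^j * D^e) * Dinv^e = 1 * Dinv^e] (mod int p)" using c2 by (intro cong_mult) auto
    have "[(4*D)^j * 1 = 1 * Dinv^e] (mod int p)" using cong_trans[OF h110[unfolded h116] h117] .
    then have "[(4*D)^j = Dinv^e] (mod int p)" by (simp only: mult_1 mult_1_right)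
    then show "zs_cong (int p) (zs_pow D (zs_A D p) ((p - 1) * (p - 3) div 4)) (Dinv ^ ((p - 1) div 4), 0)"
    proof -
      have ed: "(p - 1) div 4 = e" using pe by simp
      show ?thesis unfolding m ed using fin[OF Am[of j] \<open>[(4*D)^j = Dinv^e] (mod int p)\<close>] .
    qed
  next
    assume c3: "[p = 3] (mod 4)"
    define q where "q = p div 4"
    have pq: "p = 4*q+3" using a5[OF c3] unfolding q_def .
    have hq: "h = 2*q+1" using pq unfolding h_def by simp
    have m: "(p - 1) * (p - 3) div 4 = 2 * (h*q)" using a6[OF pq hq] .
    have F2: "[2^(p-1) = 1] (mod int p)" using fermat_int[OF pp n2] by simp
    have "(4*D)^h = 2^(p-1) * D^h" using a7[OF ph] .
    moreover have "[2^(p-1) * D^h = 1 * (-1)] (mod int p)" using F2 Dh by (rule cong_mult)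
    ultimately have "[(4*D)^h = -1] (mod int p)" by (metis mult_1)
    then have "[((4*D)^h)^q = (-1)^q] (mod int p)" by (rule cong_pow)
    then have "[(4*D)^(h*q) = (-1)^q] (mod int p)" by (simp add: power_mult)
    then show "zs_cong (int p) (zs_pow D (zs_A D p) ((p - 1) * (p - 3) div 4)) ((-1) ^ ((p - 3) div 4), 0)"
    proof -
      have qd: "(p - 3) div 4 = q" using pq by simp
      show ?thesis unfolding m qd using fin[OF Am[of "h*q"] \<open>[(4*D)^(h*q) = (-1)^q] (mod int p)\<close>] .
    qed
  qed
qed


end
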